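(* Let $A\in\mathbf{R}^{I\times H}$ with columns $a_1,\dots,a_H$, and let $\mathcal{C}=\{A\nu:\nu\in\mathbf{R}^H,\ \nu\ge 0\}$. Let $B\in\mathbf{R}^{m\times I}$ be such that $\mathcal{C}=\{t\in\mathbf{R}^I: Bt\le 0\}$, with rows $b_1',\dots,b_m'$ ordered as $B=\begin{bmatrix}B^{\le}\\ B^{=}\end{bmatrix}$, where $B^{\le}\in\mathbf{R}^{\bar m\times I}$ consists of the rows corresponding to inequality constraints (rows $b_k$ for which $b_k'a_h\neq 0$ for some $h$) and $B^{=}\in\mathbf{R}^{(m-\bar m)\times I}$ consists of the rows corresponding to equality constraints (rows $b_k$ with $b_k't=0$ for all $t\in\mathcal{C}$). For $\tau>0$ define $\mathcal{C}_\tau=\{A\nu:\nu\ge(\tau/H)\mathbf{1}_H\}$, where $\mathbf{1}_H$ is the $H$-vector of ones. Then $$\mathcal{C}_\tau=\{t\in\mathbf{R}^I: Bt\le-\tau\phi\}$$ for some $\phi=(\phi_1,\dots,\phi_m)'$ in the column space of $B$ with the properties that (i) $(\phi_1,\dots,\phi_{\bar m})'\in\mathbf{R}^{\bar m}_{++}$, and (ii) $\phi_k=0$ for all $k>\bar m$.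
   Context: Vector inequalities are componentwise; $\mathbf{R}^{\bar m}_{++}$ denotes vectors with all entries strictly positive. *)

theory Defs
  imports "Jordan_Normal_Form.Matrix"
begin

definition cone_gen :: "real mat \<Rightarrow> real vec set" where
  "cone_gen A = {A *\<^sub>v \<nu> | \<nu>. \<nu> \<in> carrier_vec (dim_col A) \<and> (\<forall>h<dim_col A. \<nu> $ h \<ge> 0)}"

definition cone_tau :: "real mat \<Rightarrow> real \<Rightarrow> real vec set" where
  "cone_tau A \<tau> = {A *\<^sub>v \<nu> | \<nu>. \<nu> \<in> carrier_vec (dim_col A) \<and>
      (\<forall>h<dim_col A. \<nu> $ h \<ge> \<tau> / real (dim_col A))}"

end

theory Submission
  imports Defs
begin

lemma col_as_mult:
  fixes A :: "real mat"
  assumes A: "A \<in> carrier_mat I H" and h: "h < H"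
  shows "col A h = A *\<^sub>v unit_vec H h"
proof (rule eq_vecI)
  fix i assume "i < dim_vec (A *\<^sub>v unit_vec H h)"
  hence i: "i < I" using A by simp
  have "row A i \<bullet> unit_vec H h = row A i $ h" using h by simp
  thus "col A h $ i = (A *\<^sub>v unit_vec H h) $ i" using A h i by simp
qed (use A in simp)

theorem lemma1:
  fixes A B :: "real mat" and I H m mbar :: nat
  assumes A: "A \<in> carrier_mat I H"
    and B: "B \<in> carrier_mat m I"
    and mbar: "mbar \<le> m"
    and C_eq: "cone_gen A = {t \<in> carrier_vec I. \<forall>k<m. (B *\<^sub>v t) $ k \<le> 0}"
    and ineq_rows: "\<forall>k<mbar. \<exists>h<H. row B k \<bullet> col A h \<noteq> 0"
    and eq_rows: "\<forall>k. mbar \<le> k \<and> k < m \<longrightarrow> (\<forall>t\<in>cone_gen A. row B k \<bullet> t = 0)"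
  shows "\<exists>\<phi>\<in>carrier_vec m. (\<exists>x\<in>carrier_vec I. \<phi> = B *\<^sub>v x)
           \<and> (\<forall>k<mbar. \<phi> $ k > 0)
           \<and> (\<forall>k. mbar \<le> k \<and> k < m \<longrightarrow> \<phi> $ k = 0)
           \<and> (\<forall>\<tau>>0. cone_tau A \<tau> =
                 {t \<in> carrier_vec I. \<forall>k<m. (B *\<^sub>v t) $ k \<le> - \<tau> * \<phi> $ k})"
proof -
  have dA: "dim_col A = H" "dim_row A = I" using A by auto
  have dB: "dim_col B = I" "dim_row B = m" using B by auto
  define e where "e = vec H (\<lambda>_. 1 / real H)"
  define c where "c = A *\<^sub>v e"
  have e: "e \<in> carrier_vec H" unfolding e_def by simp
  have c: "c \<in> carrier_vec I" unfolding c_def using A e by simp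
  have cC: "c \<in> cone_gen A" unfolding cone_gen_def c_def using e dA by (auto simp: e_def)
  have colC: "col A h \<in> cone_gen A" if "h < H" for h
    unfolding cone_gen_def col_as_mult[OF A that] using dA that by auto
  have Bneg: "(B *\<^sub>v t) $ k \<le> 0" if "t \<in> cone_gen A" "k < m" for t k
    using that C_eq by auto
  define \<phi> where "\<phi> = B *\<^sub>v (- c)"
  have phik: "\<phi> $ k = - (B *\<^sub>v c) $ k" if "k < m" for k
    unfolding \<phi>_def using that dB c by auto
  have Bc: "(B *\<^sub>v c) $ k = (\<Sum>h<H. (row B k \<bullet> col A h) * (1 / real H))" if "k < m" for k
  proof -
    have "(B *\<^sub>v c) = (B * A) *\<^sub>v e" unfolding c_def using A B e by simp
    hence "(B *\<^sub>v c) $ k = row (B * A) k \<bullet> e" using that dB by simp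
    also have "\<dots> = (\<Sum>h<H. (row B k \<bullet> col A h) * (1 / real H))"
      unfolding scalar_prod_def e_def using that A B
      by (auto intro!: sum.cong simp: lessThan_atLeast0 scalar_prod_def)
    finally show ?thesis .
  qed
  show ?thesis
  proof (rule bexI[of _ \<phi>], intro conjI allI impI)
    show "\<exists>x\<in>carrier_vec I. \<phi> = B *\<^sub>v x" unfolding \<phi>_def using c by auto
  next
    fix k assume k: "k < mbar"
    hence km: "k < m" using mbar by simp
    obtain h0 where h0: "h0 < H" "row B k \<bullet> col A h0 \<noteq> 0" using ineq_rows k by auto
    have le: "row B k \<bullet> col A h \<le> 0" if "h < H" for h
      using Bneg[OF colC[OF that] km] km dB by simp
    have Hpos: "real H > 0" using h0 by simp
    have "(\<Sum>h<H. (row B k \<bullet> col A h) * (1 / real H)) < 0"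
    proof -
      have "(\<Sum>h<H. (row B k \<bullet> col A h) * (1 / real H)) < (\<Sum>h<H. 0)"
        apply (rule sum_strict_mono_ex1)
      proof -
        show "\<forall>h\<in>{..<H}. row B k \<bullet> col A h * (1 / real H) \<le> 0"
          using le Hpos by (auto simp: divide_nonpos_pos)
        have "row B k \<bullet> col A h0 < 0" using le[OF h0(1)] h0(2) by simp
        thus "\<exists>h\<in>{..<H}. row B k \<bullet> col A h * (1 / real H) < 0"
          using h0 Hpos by (intro bexI[of _ h0]) (auto simp: divide_neg_pos)
      qed (simp)
      thus ?thesis by simp
    qed
    thus "\<phi> $ k > 0" using phik[OF km] Bc[OF km] by simp
  next
    fix k assume k: "mbar \<le> k \<and> k < m"
    thus "\<phi> $ k = 0" using phik eq_rows cC dB by auto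
  next
    fix \<tau> :: real assume tau: "\<tau> > 0"
    have te: "A *\<^sub>v (\<tau> \<cdot>\<^sub>v e) = \<tau> \<cdot>\<^sub>v c" unfolding c_def using mult_mat_vec[OF A e] .
    have key: "(B *\<^sub>v (t - \<tau> \<cdot>\<^sub>v c)) $ k = (B *\<^sub>v t) $ k - \<tau> * (B *\<^sub>v c) $ k"
      if "t \<in> carrier_vec I" "k < m" for t k
    proof -
      have "B *\<^sub>v (t - \<tau> \<cdot>\<^sub>v c) = B *\<^sub>v t - \<tau> \<cdot>\<^sub>v (B *\<^sub>v c)"
        using mult_minus_distrib_mat_vec[OF B that(1), of "\<tau> \<cdot>\<^sub>v c"] mult_mat_vec[OF B c] c by simp
      thus ?thesis using that B c by simp
    qed
    show "cone_tau A \<tau> = {t \<in> carrier_vec I. \<forall>k<m. (B *\<^sub>v t) $ k \<le> - \<tau> * \<phi> $ k}"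
    proof (rule equalityI; rule subsetI)
      fix t assume "t \<in> cone_tau A \<tau>"
      then obtain \<nu> where nu: "t = A *\<^sub>v \<nu>" "\<nu> \<in> carrier_vec H" "\<forall>h<H. \<nu> $ h \<ge> \<tau> / real H"
        unfolding cone_tau_def using dA by auto
      have tI: "t \<in> carrier_vec I" using nu A by simp
      have "t - \<tau> \<cdot>\<^sub>v c = A *\<^sub>v (\<nu> - \<tau> \<cdot>\<^sub>v e)"
        using mult_minus_distrib_mat_vec[OF A nu(2), of "\<tau> \<cdot>\<^sub>v e"] e te nu by simp
      moreover have "A *\<^sub>v (\<nu> - \<tau> \<cdot>\<^sub>v e) \<in> cone_gen A"
        unfolding cone_gen_def using nu e dA by (auto simp: e_def)
      ultimately have "t - \<tau> \<cdot>\<^sub>v c \<in> cone_gen A" by simp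
      hence "\<forall>k<m. (B *\<^sub>v t) $ k \<le> - \<tau> * \<phi> $ k"
        using Bneg key[OF tI] phik by fastforce
      thus "t \<in> {t \<in> carrier_vec I. \<forall>k<m. (B *\<^sub>v t) $ k \<le> - \<tau> * \<phi> $ k}" using tI by simp
    next
      fix t assume "t \<in> {t \<in> carrier_vec I. \<forall>k<m. (B *\<^sub>v t) $ k \<le> - \<tau> * \<phi> $ k}"
      hence tI: "t \<in> carrier_vec I" and tB: "\<forall>k<m. (B *\<^sub>v t) $ k \<le> - \<tau> * \<phi> $ k" by auto
      have "t - \<tau> \<cdot>\<^sub>v c \<in> cone_gen A"
        unfolding C_eq using tI c key[OF tI] tB phik by auto
      then obtain \<mu> where mu: "t - \<tau> \<cdot>\<^sub>v c = A *\<^sub>v \<mu>" "\<mu> \<in> carrier_vec H" "\<forall>h<H. \<mu> $ h \<ge> 0"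
        unfolding cone_gen_def using dA by auto
      have "t = A *\<^sub>v (\<mu> + \<tau> \<cdot>\<^sub>v e)"
      proof -
        have "A *\<^sub>v (\<mu> + \<tau> \<cdot>\<^sub>v e) = (t - \<tau> \<cdot>\<^sub>v c) + \<tau> \<cdot>\<^sub>v c"
          using mult_add_distrib_mat_vec[OF A mu(2), of "\<tau> \<cdot>\<^sub>v e"] e te mu by simp
        also have "\<dots> = t" using tI c by auto
        finally show ?thesis by simp
      qed
      moreover have "\<forall>h<H. (\<mu> + \<tau> \<cdot>\<^sub>v e) $ h \<ge> \<tau> / real H"
        using mu e by (auto simp: e_def)
      ultimately show "t \<in> cone_tau A \<tau>"
        unfolding cone_tau_def using mu e dA by auto
    qed
  next
    show "\<phi> \<in> carrier_vec m" unfolding \<phi>_def using B c by simp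
  qed
qed

end
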